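(* Assume the Setup below and $|n-p-1|>1$. Let $m=\min(p,n-1)$ and let $\sigma_1\ge\dots\ge\sigma_m>0$ be the nonzero singular values of $\Sigma^{-1/2}(X-\bar X)$ (which are almost surely positive). Then, almost surely: (1) for either choice $\hat\alpha=c$ (with $c_0=0$) or $\hat\alpha=c\,\mathrm{tr}(W)$ (with $c_0=c$), $\hat a_S\to|n-p-1|-1$ as $c\to0$; (2) as $c\to\infty$, for each $i=1,\dots,m$, $$\frac{\hat a_S}{\sigma_i^2+\hat\alpha}\to\begin{cases}(n-1)p/\mathrm{tr}(W) & \text{if }\hat\alpha=c,\\ \{(n-1)p-2\}/\mathrm{tr}(W) & \text{if }\hat\alpha=c\,\mathrm{tr}(W).\end{cases}$$
   Context: Setup. Let $n\ge 2$, $p\ge1$. Let $X=(x_1,\dots,x_n)$ be a random $p\times n$ matrix whose columns are independent with $x_i\sim\mathcal N_p(\theta_i,\Sigma)$, where $\Sigma$ is a known $p\times p$ positive definite matrix and $\Theta=(\theta_1,\dots,\theta_n)\in\mathbb R^{p\times n}$. Let $\bar x=n^{-1}\sum_{j=1}^n x_j$, $\bar X=\bar x\,1_n^\top$ with $1_n=(1,\dots,1)^\top$, and $W=(X-\bar X)(X-\bar X)^\top\Sigma^{-1}$. The ridge statistic is $\hat\alpha=c$ or $\hat\alpha=c\,\mathrm{tr}(W)$ with a constant $c>0$; correspondingly $c_0=0$ or $c_0=c$. Put $V=(W+\hat\alpha I_p)^{-1}$ and define the estimated weight $$\hat a_S=\frac{(n-p-1)\mathrm{tr}(V)+\hat\alpha(\mathrm{tr}V)^2}{\mathrm{tr}(V^2W)}-(2c_0+1).$$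 *)

theory Defs
  imports "HOL-Analysis.Analysis"
begin

definition pos_def_mat :: "real^'p^'p \<Rightarrow> bool" where
  "pos_def_mat S \<longleftrightarrow> transpose S = S \<and> (\<forall>x. x \<noteq> 0 \<longrightarrow> x \<bullet> (S *v x) > 0)"

definition psd_sqrt_mat :: "real^'p^'p \<Rightarrow> real^'p^'p" where
  "psd_sqrt_mat S = (THE R. pos_def_mat R \<and> R ** R = S)"

definition inv_sqrt_mat :: "real^'p^'p \<Rightarrow> real^'p^'p" where
  "inv_sqrt_mat S = psd_sqrt_mat (matrix_inv S)"

definition singular_value :: "real^'n^'p \<Rightarrow> real \<Rightarrow> bool" where
  "singular_value A s \<longleftrightarrow> s \<ge> 0 \<and> (\<exists>v. v \<noteq> 0 \<and> (transpose A ** A) *v v = (s^2) *\<^sub>R v)"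

definition centered :: "real^'n^'p \<Rightarrow> real^'n^'p" where
  "centered X = (\<chi> i j. X$i$j - (\<Sum>k\<in>UNIV. X$i$k) / real CARD('n))"

definition Wmat :: "real^'n^'p \<Rightarrow> real^'p^'p \<Rightarrow> real^'p^'p" where
  "Wmat X Sig = centered X ** transpose (centered X) ** matrix_inv Sig"

definition a_S :: "real^'p^'p \<Rightarrow> nat \<Rightarrow> real \<Rightarrow> real \<Rightarrow> real" where
  "a_S W n \<alpha> c0 =
     (let V = matrix_inv (W + \<alpha> *\<^sub>R mat 1)
      in ((real n - real CARD('p) - 1) * trace V + \<alpha> * (trace V)^2) / trace (V ** V ** W)
         - (2 * c0 + 1))"

end

theory Submission
  imports Defs "HOL-Real_Asymp.Real_Asymp"
begin

definition dg :: "('p \<Rightarrow> real) \<Rightarrow> real^'p^'p" where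
  "dg d = (\<chi> i j. if i = j then d i else 0)"

lemma dg_mult: "dg a ** dg b = dg (\<lambda>i. a i * b i)"
proof -
  have "(\<Sum>k\<in>UNIV. (if i = k then a i else 0) * (if k = j then b k else 0)) = (if i = j then a i * b i else 0)" for i j :: 'a
  proof -
    have "(\<Sum>k\<in>UNIV. (if i = k then a i else 0) * (if k = j then b k else 0)) = (\<Sum>k\<in>UNIV. if k = i then a i * (if k = j then b k else 0) else 0)"
      by (rule sum.cong) auto
    then show ?thesis by simp
  qed
  then show ?thesis by (simp add: dg_def matrix_matrix_mult_def vec_eq_iff)
qed

lemma dg_mult2: "dg a ** (dg b ** X) = dg (\<lambda>i. a i * b i) ** X"
  by (metis matrix_mul_assoc dg_mult)

lemma mult_mat_scalar: "(Q::real^'p^'p) ** mat c = c *\<^sub>R Q"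
proof -
  have "(\<Sum>k\<in>UNIV. Q$i$k * (if k = j then c else 0)) = c * Q$i$j" for i j
  proof -
    have "(\<Sum>k\<in>UNIV. Q$i$k * (if k = j then c else 0)) = (\<Sum>k\<in>UNIV. if k = j then Q$i$k * c else 0)"
      by (rule sum.cong) auto
    then show ?thesis by simp
  qed
  then show ?thesis by (simp add: matrix_matrix_mult_def mat_def vec_eq_iff)
qed

lemma trace_dg: "trace (dg d) = sum d UNIV"
  by (simp add: trace_def dg_def)

lemma mat_dg: "(mat c :: real^'p^'p) = dg (\<lambda>_. c)"
  by (simp add: mat_def dg_def)

lemma dg_add: "dg a + dg b = dg (\<lambda>i. a i + b i)"
  by (simp add: dg_def vec_eq_iff)

lemma matrix_add_rdistrib: "((A::real^'m^'n) + B) ** C = A ** C + B ** C"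
  by (simp add: matrix_matrix_mult_def vec_eq_iff algebra_simps sum.distrib)

lemma matrix_inv_props:
  fixes A :: "real^'n^'n"
  assumes "invertible A"
  shows "A ** matrix_inv A = mat 1" "matrix_inv A ** A = mat 1"
  using someI_ex[OF assms[unfolded invertible_def]] unfolding matrix_inv_def by auto

lemma matrix_inv_eqI:
  fixes A N :: "real^'n^'n"
  assumes "A ** N = mat 1"
  shows "matrix_inv A = N"
proof -
  have inv: "invertible A" using assms invertible_right_inverse by blast
  have "matrix_inv A = (matrix_inv A ** A) ** N"
    by (simp add: matrix_mul_assoc[symmetric] assms matrix_mul_assoc)
  also have "\<dots> = N" using matrix_inv_props(2)[OF inv] by simp
  finally show ?thesis .
qed

lemma trace_conj:
  fixes Q Qi :: "real^'p^'p"
  assumes "Qi ** Q = mat 1"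
  shows "trace (Q ** dg d ** Qi) = sum d UNIV"
proof -
  have "trace (Q ** dg d ** Qi) = trace (Qi ** (Q ** dg d))" by (rule trace_mul_sym)
  also have "\<dots> = trace (dg d)" by (simp add: matrix_mul_assoc assms)
  finally show ?thesis by (simp add: trace_dg)
qed

lemma conj_mult:
  fixes Q Qi :: "real^'p^'p"
  assumes "Qi ** Q = mat 1"
  shows "(Q ** dg a ** Qi) ** (Q ** dg b ** Qi) = Q ** dg (\<lambda>i. a i * b i) ** Qi"
proof -
  have "(Q ** dg a ** Qi) ** (Q ** dg b ** Qi) = Q ** dg a ** (Qi ** Q) ** dg b ** Qi"
    by (simp add: matrix_mul_assoc)
  also have "\<dots> = Q ** dg (\<lambda>i. a i * b i) ** Qi"
    by (metis assms matrix_mul_assoc dg_mult matrix_mul_lid)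
  finally show ?thesis .
qed

lemma inv_shift:
  fixes Q Qi :: "real^'p^'p"
  assumes QQ: "Qi ** Q = mat 1" "Q ** Qi = mat 1"
    and nz: "\<And>i. \<mu> i + \<alpha> \<noteq> 0"
  shows "matrix_inv (Q ** dg \<mu> ** Qi + \<alpha> *\<^sub>R mat 1) = Q ** dg (\<lambda>i. 1 / (\<mu> i + \<alpha>)) ** Qi"
proof (rule matrix_inv_eqI)
  have "\<alpha> *\<^sub>R (mat 1 :: real^'p^'p) = Q ** dg (\<lambda>_. \<alpha>) ** Qi"
  proof -
    have "Q ** dg (\<lambda>_. \<alpha>) ** Qi = \<alpha> *\<^sub>R (Q ** Qi)"
      by (simp add: mat_dg[symmetric] mult_mat_scalar scalar_matrix_assoc)
    then show ?thesis using QQ by simp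
  qed
  then have "Q ** dg \<mu> ** Qi + \<alpha> *\<^sub>R mat 1 = Q ** dg (\<lambda>i. \<mu> i + \<alpha>) ** Qi"
    by (simp add: matrix_add_ldistrib[symmetric] matrix_add_rdistrib[symmetric] dg_add)
  then show "(Q ** dg \<mu> ** Qi + \<alpha> *\<^sub>R mat 1) ** (Q ** dg (\<lambda>i. 1 / (\<mu> i + \<alpha>)) ** Qi) = mat 1"
    using conj_mult[OF QQ(1)] nz QQ(2) by (simp add: mat_dg[symmetric])
qed

lemma lim_zero:
  fixes \<mu> :: "'p::finite \<Rightarrow> real" and N :: real
  assumes nn: "\<And>j. \<mu> j \<ge> 0" and pos: "\<exists>j. \<mu> j > 0"
    and kc: "card {j. \<mu> j = 0} = 0 \<or> N + real (card {j. \<mu> j = 0}) = 0"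
  shows "((\<lambda>\<alpha>. (N * (\<Sum>j\<in>UNIV. 1/(\<mu> j + \<alpha>)) + \<alpha> * (\<Sum>j\<in>UNIV. 1/(\<mu> j + \<alpha>))^2)
             / (\<Sum>j\<in>UNIV. \<mu> j / (\<mu> j + \<alpha>)^2))
          \<longlongrightarrow> N + 2 * real (card {j. \<mu> j = 0})) (at_right 0)"
proof -
  define Z where "Z = {j. \<mu> j = 0}"
  define k where "k = real (card Z)"
  define A1 where "A1 = (\<lambda>\<alpha>::real. \<Sum>j\<in>UNIV - Z. 1/(\<mu> j + \<alpha>))"
  define B1 where "B1 = (\<lambda>\<alpha>::real. \<Sum>j\<in>UNIV - Z. \<mu> j / (\<mu> j + \<alpha>)^2)"
  have posZ: "\<mu> j > 0" if "j \<in> UNIV - Z" for j using nn[of j] that by (auto simp: Z_def)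
  have A1lim: "(A1 \<longlongrightarrow> A1 0) (at_right 0)"
    unfolding A1_def by (intro tendsto_intros) (use posZ in \<open>fastforce\<close>)+
  have B1lim: "(B1 \<longlongrightarrow> B1 0) (at_right 0)"
    unfolding B1_def by (intro tendsto_intros) (use posZ in \<open>fastforce\<close>)+
  have B10: "B1 0 = A1 0"
    unfolding A1_def B1_def by (rule sum.cong) (use posZ in \<open>auto simp: power2_eq_square\<close>)
  obtain j0 where j0: "\<mu> j0 > 0" using pos by auto
  have "A1 0 > 0" unfolding A1_def
    by (rule sum_pos2[of _ j0]) (use j0 posZ nn in \<open>auto simp: Z_def\<close>)
  have eq: "(N * (\<Sum>j\<in>UNIV. 1/(\<mu> j + \<alpha>)) + \<alpha> * (\<Sum>j\<in>UNIV. 1/(\<mu> j + \<alpha>))^2)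
             / (\<Sum>j\<in>UNIV. \<mu> j / (\<mu> j + \<alpha>)^2)
        = ((N + 2*k) * A1 \<alpha> + \<alpha> * (A1 \<alpha>)^2) / B1 \<alpha>" if "\<alpha> > 0" for \<alpha>
  proof -
    have sA: "(\<Sum>j\<in>UNIV. 1/(\<mu> j + \<alpha>)) = A1 \<alpha> + k / \<alpha>"
    proof -
      have "(\<Sum>j\<in>UNIV. 1/(\<mu> j + \<alpha>)) = A1 \<alpha> + (\<Sum>j\<in>Z. 1/(\<mu> j + \<alpha>))"
        unfolding A1_def by (rule sum.subset_diff) auto
      also have "(\<Sum>j\<in>Z. 1/(\<mu> j + \<alpha>)) = (\<Sum>j\<in>Z. 1/\<alpha>)"
        by (rule sum.cong) (auto simp: Z_def)
      finally show ?thesis by (simp add: k_def)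
    qed
    have sB: "(\<Sum>j\<in>UNIV. \<mu> j / (\<mu> j + \<alpha>)^2) = B1 \<alpha>"
    proof -
      have "(\<Sum>j\<in>UNIV. \<mu> j / (\<mu> j + \<alpha>)^2) = B1 \<alpha> + (\<Sum>j\<in>Z. \<mu> j / (\<mu> j + \<alpha>)^2)"
        unfolding B1_def by (rule sum.subset_diff) auto
      also have "(\<Sum>j\<in>Z. \<mu> j / (\<mu> j + \<alpha>)^2) = 0"
        by (rule sum.neutral) (auto simp: Z_def)
      finally show ?thesis by simp
    qed
    have kk: "k * (N + k) = 0" using kc by (auto simp: k_def Z_def)
    have "N * (A1 \<alpha> + k / \<alpha>) + \<alpha> * (A1 \<alpha> + k / \<alpha>)^2
          = (N + 2*k) * A1 \<alpha> + \<alpha> * (A1 \<alpha>)^2 + k * (N + k) / \<alpha>"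
      using that by (simp add: field_simps power2_eq_square)
    then show ?thesis using kk sA sB by simp
  qed
  have "((\<lambda>\<alpha>. ((N + 2*k) * A1 \<alpha> + \<alpha> * (A1 \<alpha>)^2) / B1 \<alpha>) \<longlongrightarrow>
          ((N + 2*k) * A1 0 + 0 * (A1 0)^2) / B1 0) (at_right 0)"
    by (intro tendsto_intros A1lim B1lim) (use \<open>A1 0 > 0\<close> B10 in auto)
  then have "((\<lambda>\<alpha>. ((N + 2*k) * A1 \<alpha> + \<alpha> * (A1 \<alpha>)^2) / B1 \<alpha>) \<longlongrightarrow> N + 2*k) (at_right 0)"
    using \<open>A1 0 > 0\<close> B10 by simp
  then show ?thesis unfolding k_def Z_def[symmetric]
    apply (rule Lim_transform_eventually)
    using eq eventually_at_right_less[of 0] unfolding k_def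
    by (auto elim!: eventually_mono)
qed

lemma term_lim1: "((\<lambda>\<alpha>::real. \<alpha> * (1 / (m + \<alpha>))) \<longlongrightarrow> 1) at_top"
  by real_asymp

lemma term_lim2: "((\<lambda>\<alpha>::real. \<alpha>^2 * (m / (m + \<alpha>)^2)) \<longlongrightarrow> m) at_top"
  by real_asymp

lemma lim_inf:
  fixes \<mu> :: "'p::finite \<Rightarrow> real" and N T s :: real
  assumes nn: "\<And>j. \<mu> j \<ge> 0" and T: "T = (\<Sum>j\<in>UNIV. \<mu> j)" "T > 0"
  defines "F \<equiv> (\<lambda>\<alpha>. (N * (\<Sum>j\<in>UNIV. 1/(\<mu> j + \<alpha>)) + \<alpha> * (\<Sum>j\<in>UNIV. 1/(\<mu> j + \<alpha>))^2)
             / (\<Sum>j\<in>UNIV. \<mu> j / (\<mu> j + \<alpha>)^2))"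
  shows "((\<lambda>\<alpha>. (F \<alpha> - 1) / (s^2 + \<alpha>)) \<longlongrightarrow> (N * CARD('p) + (real CARD('p))^2) / T) at_top"
    and "((\<lambda>\<alpha>. (F \<alpha> - (2 * (\<alpha> / T) + 1)) / (s^2 + \<alpha>)) \<longlongrightarrow> (N * CARD('p) + (real CARD('p))^2 - 2) / T) at_top"
proof -
  define A where "A = (\<lambda>\<alpha>::real. \<Sum>j\<in>UNIV. 1/(\<mu> j + \<alpha>))"
  define B where "B = (\<lambda>\<alpha>::real. \<Sum>j\<in>UNIV. \<mu> j / (\<mu> j + \<alpha>)^2)"
  define p where "p = real CARD('p)"
  obtain j0 where j0: "\<mu> j0 > 0"
    using T nn by (metis order_less_irrefl sum_nonpos not_le)
  have Bpos: "B \<alpha> > 0" if "\<alpha> > 0" for \<alpha> unfolding B_def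
    by (rule sum_pos2[of _ j0]) (use j0 nn that in auto)
  have lA: "((\<lambda>\<alpha>. \<alpha> * A \<alpha>) \<longlongrightarrow> p) at_top"
  proof -
    have "((\<lambda>\<alpha>. \<Sum>j\<in>UNIV. \<alpha> * (1/(\<mu> j + \<alpha>))) \<longlongrightarrow> (\<Sum>j\<in>(UNIV::'p set). 1)) at_top"
      by (intro tendsto_sum term_lim1)
    then show ?thesis by (simp add: A_def p_def sum_distrib_left)
  qed
  have lB: "((\<lambda>\<alpha>. \<alpha>^2 * B \<alpha>) \<longlongrightarrow> T) at_top"
  proof -
    have "((\<lambda>\<alpha>. \<Sum>j\<in>UNIV. \<alpha>^2 * (\<mu> j / (\<mu> j + \<alpha>)^2)) \<longlongrightarrow> (\<Sum>j\<in>UNIV. \<mu> j)) at_top"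
      by (intro tendsto_sum term_lim2)
    then show ?thesis by (simp add: B_def T sum_distrib_left)
  qed
  have lG: "((\<lambda>\<alpha>. (N * (\<alpha> * A \<alpha>) + (\<alpha> * A \<alpha>)^2) / (\<alpha>^2 * B \<alpha>)) \<longlongrightarrow> (N * p + p^2) / T) at_top"
    by (intro tendsto_intros lA lB) (use T in auto)
  have l1: "((\<lambda>\<alpha>::real. \<alpha> / (s^2 + \<alpha>)) \<longlongrightarrow> 1) at_top" by real_asymp
  have l2: "((\<lambda>\<alpha>::real. 1 / (s^2 + \<alpha>)) \<longlongrightarrow> 0) at_top" by real_asymp
  have sp: "\<alpha> > 0 \<Longrightarrow> s^2 + \<alpha> > 0" for \<alpha> by (simp add: add_nonneg_pos)
  have ev: "eventually (\<lambda>\<alpha>::real. \<alpha> > 0) at_top" by (rule eventually_gt_at_top)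
  define G where "G = (\<lambda>\<alpha>. (N * (\<alpha> * A \<alpha>) + (\<alpha> * A \<alpha>)^2) / (\<alpha>^2 * B \<alpha>))"
  have Feq: "F \<alpha> = \<alpha> * G \<alpha>" if "\<alpha> > 0" for \<alpha>
  proof -
    have "F \<alpha> = (N * A \<alpha> + \<alpha> * (A \<alpha>)^2) / B \<alpha>" unfolding F_def A_def B_def ..
    then show ?thesis using that Bpos[OF that] by (simp add: G_def field_simps power2_eq_square)
  qed
  show "((\<lambda>\<alpha>. (F \<alpha> - 1) / (s^2 + \<alpha>)) \<longlongrightarrow> (N * CARD('p) + (real CARD('p))^2) / T) at_top"
  proof -
    have "((\<lambda>\<alpha>. G \<alpha> * (\<alpha> / (s^2 + \<alpha>)) - 1 / (s^2 + \<alpha>))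
         \<longlongrightarrow> (N * p + p^2) / T * 1 - 0) at_top"
      by (intro tendsto_intros lG[folded G_def] l1 l2)
    from tendsto_eq_rhs[OF this] show ?thesis unfolding p_def
      apply (rule Lim_transform_eventually)
      apply simp
      using ev apply (rule eventually_mono)
      subgoal for \<alpha> using Feq[of \<alpha>] sp[of \<alpha>]
        by (simp add: diff_divide_distrib add_divide_distrib algebra_simps)
      done
  qed
  show "((\<lambda>\<alpha>. (F \<alpha> - (2 * (\<alpha> / T) + 1)) / (s^2 + \<alpha>)) \<longlongrightarrow> (N * CARD('p) + (real CARD('p))^2 - 2) / T) at_top"
  proof -
    have "((\<lambda>\<alpha>. (G \<alpha> - 2 / T) * (\<alpha> / (s^2 + \<alpha>)) - 1 / (s^2 + \<alpha>))
         \<longlongrightarrow> ((N * p + p^2) / T - 2 / T) * 1 - 0) at_top"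
      by (intro tendsto_intros lG[folded G_def] l1 l2)
    from tendsto_eq_rhs[OF this] show ?thesis unfolding p_def
      apply (rule Lim_transform_eventually)
      apply (simp add: diff_divide_distrib)
      using ev apply (rule eventually_mono)
      subgoal for \<alpha> using Feq[of \<alpha>] T sp[of \<alpha>]
        by (simp add: diff_divide_distrib add_divide_distrib algebra_simps)
      done
  qed
qed

lemma dot_transpose: "x \<bullet> ((A::real^'n^'n) *v y) = (transpose A *v x) \<bullet> y"
  by (simp add: dot_lmul_matrix)

lemma quad_exp: "(v + t *\<^sub>R z) \<bullet> ((M::real^'n^'n) *v (v + t *\<^sub>R z))
   = v \<bullet> (M *v v) + t * (v \<bullet> (M *v z) + z \<bullet> (M *v v)) + t^2 * (z \<bullet> (M *v z))"
  by (simp add: matrix_vector_right_distrib matrix_vector_mult_scaleR inner_add_left inner_add_right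
     power2_eq_square distrib_left)

context
  fixes S W :: "real^'p^'p"
  assumes Ssym: "transpose S = S" and Spd: "\<And>x. x \<noteq> 0 \<Longrightarrow> x \<bullet> (S *v x) > 0"
    and SW: "transpose (S ** W) = S ** W"
begin

lemma ip_sym: "x \<bullet> (S *v y) = y \<bullet> (S *v x)"
  by (metis dot_transpose Ssym inner_commute)

lemma ip_W: "x \<bullet> (S *v (W *v y)) = (W *v x) \<bullet> (S *v y)"
proof -
  have "x \<bullet> (S *v (W *v y)) = x \<bullet> ((S ** W) *v y)" by (simp add: matrix_vector_mul_assoc)
  also have "\<dots> = ((S ** W) *v x) \<bullet> y" by (metis dot_transpose SW)
  also have "\<dots> = y \<bullet> (S *v (W *v x))" by (simp add: matrix_vector_mul_assoc inner_commute)
  also have "\<dots> = (W *v x) \<bullet> (S *v y)" by (rule ip_sym)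
  finally show ?thesis .
qed

lemma ip_nonneg: "x \<bullet> (S *v x) \<ge> 0"
  using Spd[of x] by (cases "x = 0") auto

lemma ip_zero: "x \<bullet> (S *v x) = 0 \<longleftrightarrow> x = 0"
  using Spd[of x] by (cases "x = 0") auto

lemma eig_exists:
  assumes U: "subspace U" and inv: "\<And>x. x \<in> U \<Longrightarrow> W *v x \<in> U"
    and u: "u \<in> U" "u \<noteq> 0"
  shows "\<exists>v\<in>U. v \<noteq> 0 \<and> (\<exists>l. W *v v = l *\<^sub>R v)"
proof -
  define K where "K = U \<inter> sphere 0 1"
  define R where "R = (\<lambda>x. (x \<bullet> (S *v (W *v x))) / (x \<bullet> (S *v x)))"
  have cK: "compact K" unfolding K_def
    by (intro closed_Int_compact closed_subspace U compact_sphere)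
  have "u /\<^sub>R norm u \<in> K" using u U by (simp add: K_def subspace_scale)
  then have neK: "K \<noteq> {}" by auto
  have K0: "x \<noteq> 0" if "x \<in> K" for x using that by (auto simp: K_def)
  have "continuous_on K R" unfolding R_def matrix_vector_mul_assoc
    by (intro continuous_intros) (use K0 ip_zero in auto)
  then obtain v where v: "v \<in> K" and vmax: "\<And>y. y \<in> K \<Longrightarrow> R y \<le> R v"
    using continuous_attains_sup[OF cK neK] by blast
  define l where "l = R v"
  have vU: "v \<in> U" and v0: "v \<noteq> 0" using v K0 by (auto simp: K_def)
  have vpos: "v \<bullet> (S *v v) > 0" using Spd v0 by auto
  have vl: "v \<bullet> (S *v (W *v v)) = l * (v \<bullet> (S *v v))"
    using vpos by (simp add: l_def R_def)
  have bound: "y \<bullet> (S *v (W *v y)) \<le> l * (y \<bullet> (S *v y))" if yU: "y \<in> U" for y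
  proof (cases "y = 0")
    case True then show ?thesis by simp
  next
    case False
    define y' where "y' = y /\<^sub>R norm y"
    have "y' \<in> K" using False yU by (simp add: K_def y'_def subspace_scale U)
    then have "R y' \<le> l" using vmax l_def by auto
    moreover have "R y' = R y" unfolding R_def y'_def using False
      by (simp add: matrix_vector_mult_scaleR power2_eq_square)
    ultimately have "R y \<le> l" by simp
    moreover have "y \<bullet> (S *v y) > 0" using Spd False by auto
    ultimately show ?thesis by (simp add: R_def divide_le_eq)
  qed
  define z where "z = W *v v - l *\<^sub>R v"
  have zU: "z \<in> U" unfolding z_def using vU inv U by (simp add: subspace_diff subspace_scale)
  define a where "a = z \<bullet> (S *v z)"
  define c where "c = z \<bullet> (S *v (W *v z)) - l * (z \<bullet> (S *v z))"
  have quad: "2 * t * a + t^2 * c \<le> 0" for t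
  proof -
    have yU: "v + t *\<^sub>R z \<in> U" using vU zU U by (simp add: subspace_add subspace_scale)
    have e1: "v \<bullet> (S *v (W *v z)) = z \<bullet> (S *v (W *v v))"
      by (metis ip_W ip_sym)
    have e2: "v \<bullet> (S *v z) = z \<bullet> (S *v v)" by (rule ip_sym)
    have e3: "z \<bullet> (S *v (W *v v)) - l * (z \<bullet> (S *v v)) = a"
      unfolding a_def z_def by (simp add: algebra_simps inner_diff_right)
    have q1: "(v + t *\<^sub>R z) \<bullet> (S *v (W *v (v + t *\<^sub>R z))) =
       v \<bullet> (S *v (W *v v)) + t * (v \<bullet> (S *v (W *v z)) + z \<bullet> (S *v (W *v v))) + t^2 * (z \<bullet> (S *v (W *v z)))"
      using quad_exp[of v t z "S ** W"] by (simp add: matrix_vector_mul_assoc)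
    have q2: "(v + t *\<^sub>R z) \<bullet> (S *v (v + t *\<^sub>R z)) =
       v \<bullet> (S *v v) + t * (v \<bullet> (S *v z) + z \<bullet> (S *v v)) + t^2 * (z \<bullet> (S *v z))"
      by (rule quad_exp)
    have "(v + t *\<^sub>R z) \<bullet> (S *v (W *v (v + t *\<^sub>R z))) - l * ((v + t *\<^sub>R z) \<bullet> (S *v (v + t *\<^sub>R z)))
       = (v \<bullet> (S *v (W *v v)) - l * (v \<bullet> (S *v v)))
         + t * ((v \<bullet> (S *v (W *v z))) + z \<bullet> (S *v (W *v v)) - 2 * l * (z \<bullet> (S *v v)))
         + t^2 * c"
      unfolding q1 q2 c_def e2 by (simp add: algebra_simps)
    also have "\<dots> = 2 * t * a + t^2 * c" using vl e1 e3 by (simp add: algebra_simps)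
    finally show ?thesis using bound[OF yU] by simp
  qed
  have "a \<le> 0"
  proof (rule ccontr)
    assume "\<not> a \<le> 0"
    then have ap: "a > 0" by simp
    define t where "t = a / (\<bar>c\<bar> + 1)"
    have tp: "t > 0" using ap by (simp add: t_def)
    have "t * \<bar>c\<bar> \<le> a" using ap by (simp add: t_def field_simps)
    then have h2: "t * (t * \<bar>c\<bar>) \<le> t * a" using tp by (simp add: mult_left_mono)
    have h1: "t * (t * c) \<ge> t * (t * (- \<bar>c\<bar>))"
      using tp by (intro mult_left_mono) auto
    have "t * a > 0" using tp ap by simp
    then have "2 * t * a + t^2 * c > 0" using h1 h2
      by (simp add: power2_eq_square algebra_simps)
    with quad[of t] show False by simp
  qed
  then have "z = 0" using ip_nonneg[of z] ip_zero[of z] by (simp add: a_def)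
  then show ?thesis using vU v0 by (auto simp: z_def intro!: bexI[of _ v])
qed

lemma eig_basis:
  assumes "subspace U" "\<And>x. x \<in> U \<Longrightarrow> W *v x \<in> U"
  shows "\<exists>B. B \<subseteq> U \<and> independent B \<and> U \<subseteq> span B \<and> (\<forall>b\<in>B. \<exists>l. W *v b = l *\<^sub>R b)"
  using assms
proof (induction "dim U" arbitrary: U rule: less_induct)
  case less
  show ?case
  proof (cases "\<exists>u\<in>U. u \<noteq> 0")
    case False
    then have "U \<subseteq> span {}" by auto
    then show ?thesis by (intro exI[of _ "{}"]) (auto simp: independent_empty)
  next
    case True
    then obtain u where u: "u \<in> U" "u \<noteq> 0" by auto
    obtain v l where vU: "v \<in> U" and v0: "v \<noteq> 0" and vl: "W *v v = l *\<^sub>R v"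
      using eig_exists[OF less.prems u] by blast
    define U' where "U' = {x\<in>U. x \<bullet> (S *v v) = 0}"
    have sU': "subspace U'" using less.prems(1)
      unfolding U'_def subspace_def by (auto simp: inner_add_left)
    have invU': "W *v x \<in> U'" if "x \<in> U'" for x
    proof -
      have "(W *v x) \<bullet> (S *v v) = x \<bullet> (S *v (W *v v))" by (rule ip_W[symmetric])
      also have "\<dots> = 0" using that by (simp add: U'_def vl matrix_vector_mult_scaleR)
      finally show ?thesis using that less.prems(2) by (simp add: U'_def)
    qed
    have vnot: "v \<notin> U'" using ip_zero[of v] v0 by (simp add: U'_def)
    have sub: "U' \<subseteq> U" by (auto simp: U'_def)
    have e1: "span U' = U'" using sU' by (rule span_eq_iff[THEN iffD2])
    have e2: "span U = U" using less.prems(1) by (rule span_eq_iff[THEN iffD2])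
    have "U' \<subset> U" using sub vnot vU by blast
    then have "span U' \<subset> span U" unfolding e1 e2 .
    then have "dim U' < dim U" using dim_psubset by blast
    from less.hyps[OF this sU' invU'] obtain B' where
      B': "B' \<subseteq> U'" "independent B'" "U' \<subseteq> span B'" "\<forall>b\<in>B'. \<exists>l. W *v b = l *\<^sub>R b"
      by blast
    have spB': "span B' \<subseteq> U'" using B'(1) sU' by (rule span_minimal)
    have "independent (insert v B')"
      using B'(2) spB' vnot by (auto simp: independent_insert)
    moreover have "U \<subseteq> span (insert v B')"
    proof
      fix x assume xU: "x \<in> U"
      define c where "c = (x \<bullet> (S *v v)) / (v \<bullet> (S *v v))"
      have vp: "v \<bullet> (S *v v) \<noteq> 0" using ip_zero[of v] v0 by simp
      have "x - c *\<^sub>R v \<in> U'"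
        using xU vU less.prems(1) vp
        by (simp add: U'_def c_def subspace_diff subspace_scale inner_diff_left)
      then have "x - c *\<^sub>R v \<in> span (insert v B')"
        using B'(3) span_mono[of B' "insert v B'"] by auto
      moreover have "c *\<^sub>R v \<in> span (insert v B')" by (simp add: span_base span_scale)
      ultimately have "(x - c *\<^sub>R v) + c *\<^sub>R v \<in> span (insert v B')" by (rule span_add)
      then show "x \<in> span (insert v B')" by simp
    qed
    moreover have "insert v B' \<subseteq> U" using B'(1) sub vU by auto
    ultimately show ?thesis using B'(4) vl by (intro exI[of _ "insert v B'"]) auto
  qed
qed

lemma diag_exists:
  assumes psd: "\<And>x. x \<bullet> (S *v (W *v x)) \<ge> 0"
  shows "\<exists>(Q::real^'p^'p) Qi \<mu>. Qi ** Q = mat 1 \<and> Q ** Qi = mat 1 \<and> W = Q ** dg \<mu> ** Qi \<and> (\<forall>j. \<mu> j \<ge> 0)"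
proof -
  obtain B where B: "independent B" "UNIV \<subseteq> span B" "\<forall>b\<in>B. \<exists>l. W *v b = l *\<^sub>R b"
    using eig_basis[of UNIV] subspace_UNIV by blast
  have finB: "finite B" using indep_card_eq_dim_span[OF B(1)] by simp
  have "card B = dim (UNIV :: (real^'p) set)" by (rule basis_card_eq_dim) (use B in auto)
  then have cB: "card B = CARD('p)" by (metis dim_UNIV DIM_cart DIM_real mult_1_right)
  obtain e where e: "bij_betw e (UNIV::'p set) B"
    using finite_same_card_bij[OF finite_class.finite_UNIV finB cB[symmetric]] by blast
  have eB: "e j \<in> B" for j using e by (auto simp: bij_betw_def)
  define \<mu> where "\<mu> j = (SOME l. W *v e j = l *\<^sub>R e j)" for j
  have eig: "W *v e j = \<mu> j *\<^sub>R e j" for j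
  proof -
    have "\<exists>l. W *v e j = l *\<^sub>R e j" using B(3) eB[of j] by blast
    then show ?thesis unfolding \<mu>_def by (rule someI_ex)
  qed
  have e0: "e j \<noteq> 0" for j using eB[of j] B(1) dependent_zero by metis
  have mu_nn: "\<mu> j \<ge> 0" for j
  proof -
    have "0 \<le> e j \<bullet> (S *v (W *v e j))" by (rule psd)
    also have "\<dots> = \<mu> j * (e j \<bullet> (S *v e j))" by (simp add: eig matrix_vector_mult_scaleR)
    finally show ?thesis using Spd[OF e0[of j]] by (simp add: zero_le_mult_iff)
  qed
  define Q :: "real^'p^'p" where "Q = (\<chi> i j. e j $ i)"
  have WQ: "W ** Q = Q ** dg \<mu>"
  proof -
    have "(\<Sum>k\<in>UNIV. W $ i $ k * e j $ k) = \<mu> j * e j $ i" for i j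
    proof -
      have "(\<Sum>k\<in>UNIV. W $ i $ k * e j $ k) = (W *v e j) $ i" by (simp add: matrix_vector_mult_def)
      then show ?thesis by (simp add: eig)
    qed
    moreover have "(\<Sum>k\<in>UNIV. e k $ i * (if k = j then \<mu> k else 0)) = \<mu> j * e j $ i" for i j
    proof -
      have "(\<Sum>k\<in>UNIV. e k $ i * (if k = j then \<mu> k else 0)) = (\<Sum>k\<in>UNIV. if k = j then e k $ i * \<mu> k else 0)"
        by (rule sum.cong) auto
      then show ?thesis by simp
    qed
    ultimately show ?thesis by (simp add: Q_def dg_def matrix_matrix_mult_def vec_eq_iff)
  qed
  have Qax: "Q *v axis j 1 = e j" for j
    by (simp add: matrix_vector_mult_basis column_def Q_def vec_eq_iff)
  have sr: "subspace (range ((*v) Q))"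
    by (rule linear_subspace_image[OF matrix_vector_mul_linear subspace_UNIV])
  have "B \<subseteq> range ((*v) Q)"
  proof
    fix b assume "b \<in> B"
    then obtain j where "b = e j" using e by (auto simp: bij_betw_def)
    then show "b \<in> range ((*v) Q)" using Qax by (metis rangeI)
  qed
  then have "span B \<subseteq> range ((*v) Q)" using sr by (rule span_minimal)
  then have "surj ((*v) Q)" using B(2) by auto
  then obtain Qi where QQi: "Q ** Qi = mat 1" using matrix_right_invertible_surjective by blast
  then have QiQ: "Qi ** Q = mat 1" using matrix_left_right_inverse by blast
  have "W = W ** (Q ** Qi)" by (simp add: QQi)
  also have "\<dots> = Q ** dg \<mu> ** Qi" by (metis matrix_mul_assoc WQ)
  finally show ?thesis using QQi QiQ mu_nn by (intro exI[of _ Q] exI[of _ Qi] exI[of _ \<mu>]) auto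
qed

end

lemma dot_transpose_gen: "x \<bullet> ((A::real^'n^'m) *v y) = (transpose A *v x) \<bullet> y"
  by (simp add: dot_lmul_matrix)

lemma Sig_facts:
  fixes Sig :: "real^'p^'p"
  assumes pd: "pos_def_mat Sig"
  defines "S \<equiv> matrix_inv Sig"
  shows "Sig ** S = mat 1" "S ** Sig = mat 1" "transpose S = S"
    "\<And>x. x \<noteq> 0 \<Longrightarrow> x \<bullet> (S *v x) > 0"
proof -
  have sym: "transpose Sig = Sig" and pos: "\<And>x. x \<noteq> 0 \<Longrightarrow> x \<bullet> (Sig *v x) > 0"
    using pd by (auto simp: pos_def_mat_def)
  have "\<forall>x. Sig *v x = 0 \<longrightarrow> x = 0"
    using pos by (metis inner_zero_right less_irrefl)
  then have "\<exists>B. B ** Sig = mat 1" by (simp add: matrix_left_invertible_ker)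
  then have inv: "invertible Sig" by (simp add: invertible_left_inverse)
  show SS: "Sig ** S = mat 1" "S ** Sig = mat 1"
    using matrix_inv_props[OF inv] by (simp_all add: S_def)
  have "transpose S ** Sig = mat 1"
    by (metis SS(1) sym matrix_transpose_mul transpose_mat)
  then have "transpose S = transpose S ** (Sig ** S)" by (simp add: SS)
  also have "\<dots> = S" by (metis matrix_mul_assoc matrix_mul_lid \<open>transpose S ** Sig = mat 1\<close>)
  finally show "transpose S = S" .
  show "x \<bullet> (S *v x) > 0" if "x \<noteq> 0" for x
  proof -
    define y where "y = S *v x"
    have xy: "x = Sig *v y" by (simp add: y_def matrix_vector_mul_assoc SS)
    then have "y \<noteq> 0" using that by auto
    then have "y \<bullet> (Sig *v y) > 0" by (rule pos)
    moreover have "S *v x = y" by (simp add: y_def)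
    ultimately show ?thesis using xy by (simp add: inner_commute)
  qed
qed

lemma W_facts:
  fixes X :: "real^'n^'p" and Sig :: "real^'p^'p"
  assumes Ssym: "transpose S = S"
  defines "C \<equiv> centered X"
  assumes W: "W = C ** transpose C ** S"
  shows "transpose (S ** W) = S ** W" "\<And>x. x \<bullet> (S *v (W *v x)) \<ge> 0"
proof -
  show "transpose (S ** W) = S ** W"
    unfolding W by (simp add: matrix_transpose_mul Ssym matrix_mul_assoc)
  show "x \<bullet> (S *v (W *v x)) \<ge> 0" for x
  proof -
    have "x \<bullet> (S *v (W *v x)) = (S *v x) \<bullet> (C *v (transpose C *v (S *v x)))"
    proof -
      have "W *v x = C *v (transpose C *v (S *v x))" by (simp add: W matrix_vector_mul_assoc matrix_mul_assoc)
      moreover have "x \<bullet> (S *v y) = (S *v x) \<bullet> y" for y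
        using dot_transpose_gen[of x S y] Ssym by simp
      ultimately show ?thesis by simp
    qed
    also have "\<dots> = (transpose C *v (S *v x)) \<bullet> (transpose C *v (S *v x))"
      by (rule dot_transpose_gen)
    finally show ?thesis by simp
  qed
qed

lemma rank_CCt:
  fixes C :: "real^'n^'p"
  shows "rank (C ** transpose C) = rank C"
proof -
  define T where "T = range ((*v) (transpose C))"
  have sT: "subspace T" unfolding T_def
    by (rule linear_subspace_image[OF matrix_vector_mul_linear subspace_UNIV])
  have r: "range ((*v) (C ** transpose C)) = (*v) C ` T"
    by (auto simp: T_def image_iff matrix_vector_mul_assoc[symmetric])
  have inj: "inj_on ((*v) C) (span T)"
  proof (rule inj_onI)
    fix x y assume xs: "x \<in> span T" and ys: "y \<in> span T" and eq: "C *v x = C *v y"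
    have spT: "span T = T" using span_eq_iff[THEN iffD2, OF sT] .
    have xT: "x \<in> T" and yT: "y \<in> T" using xs ys spT by auto
    obtain a where xa: "x = transpose C *v a" using xT unfolding T_def by blast
    obtain b where yb: "y = transpose C *v b" using yT unfolding T_def by blast
    define d where "d = a - b"
    have "C *v (transpose C *v d) = 0"
      using eq by (simp add: xa yb d_def matrix_vector_mult_diff_distrib)
    then have "(transpose C *v d) \<bullet> (transpose C *v d) = 0"
      by (metis dot_transpose_gen inner_zero_right)
    then have "transpose C *v d = 0" by simp
    then show "x = y" by (simp add: xa yb d_def matrix_vector_mult_diff_distrib)
  qed
  have "rank (C ** transpose C) = dim ((*v) C ` T)" by (simp add: rank_dim_range r)
  also have "\<dots> = dim T" by (rule dim_image_eq[OF matrix_vector_mul_linear inj])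
  also have "\<dots> = rank (transpose C)" by (simp add: rank_dim_range T_def)
  also have "\<dots> = rank C" by (rule rank_transpose)
  finally show ?thesis .
qed

lemma rank_mul_inv_right:
  fixes G S Si :: "real^'p^'p"
  assumes "S ** Si = mat 1"
  shows "rank (G ** S) = rank G"
proof (rule antisym)
  show "rank (G ** S) \<le> rank G" by (rule rank_mul_le_left)
  have "rank G = rank (G ** S ** Si)" by (metis assms matrix_mul_assoc matrix_mul_rid)
  also have "\<dots> \<le> rank (G ** S)" by (rule rank_mul_le_left)
  finally show "rank G \<le> rank (G ** S)" .
qed

lemma rank_conj:
  fixes Q Qi D :: "real^'p^'p"
  assumes "Qi ** Q = mat 1" "Q ** Qi = mat 1"
  shows "rank (Q ** D ** Qi) = rank D"
proof -
  have "rank (Q ** D ** Qi) = rank (Q ** D)" by (rule rank_mul_inv_right[OF assms(1)])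
  also have "\<dots> = rank D"
  proof (rule antisym)
    show "rank (Q ** D) \<le> rank D" by (rule rank_mul_le_right)
    have "rank D = rank (Qi ** (Q ** D))" by (metis assms matrix_mul_assoc matrix_mul_lid)
    also have "\<dots> \<le> rank (Q ** D)" by (rule rank_mul_le_right)
    finally show "rank D \<le> rank (Q ** D)" .
  qed
  finally show ?thesis .
qed

lemma rank_dg: "rank (dg (\<mu> :: 'p::finite \<Rightarrow> real)) = card {j. \<mu> j \<noteq> 0}"
proof -
  define A where "A = (\<lambda>j. axis j (1::real)) ` {j. \<mu> j \<noteq> 0}"
  have row: "row i (dg \<mu>) = \<mu> i *\<^sub>R axis i 1" for i
    by (simp add: row_def dg_def axis_def vec_eq_iff)
  have rows: "rows (dg \<mu>) = (\<lambda>i. \<mu> i *\<^sub>R axis i 1) ` UNIV"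
    by (auto simp: rows_def row)
  have s1: "rows (dg \<mu>) \<subseteq> span A"
  proof
    fix r assume "r \<in> rows (dg \<mu>)"
    then obtain i where r: "r = \<mu> i *\<^sub>R axis i 1" using rows by auto
    show "r \<in> span A"
    proof (cases "\<mu> i = 0")
      case True then show ?thesis by (simp add: r span_zero)
    next
      case False then have "axis i 1 \<in> A" by (auto simp: A_def)
      then show ?thesis by (simp add: r span_base span_scale)
    qed
  qed
  have s2: "A \<subseteq> span (rows (dg \<mu>))"
  proof
    fix a assume "a \<in> A"
    then obtain i where a: "a = axis i 1" and mi: "\<mu> i \<noteq> 0" by (auto simp: A_def)
    have "\<mu> i *\<^sub>R axis i 1 \<in> rows (dg \<mu>)" using rows by auto
    then have "(1 / \<mu> i) *\<^sub>R (\<mu> i *\<^sub>R axis i (1::real)) \<in> span (rows (dg \<mu>))"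
      by (simp add: span_base span_scale del: scaleR_scaleR)
    then show "a \<in> span (rows (dg \<mu>))" using mi by (simp add: a)
  qed
  have indA: "independent A"
  proof (rule independent_mono[OF independent_Basis])
    show "A \<subseteq> Basis" by (auto simp: A_def Basis_vec_def)
  qed
  have "rank (dg \<mu>) = dim (rows (dg \<mu>))" by (rule row_rank_def)
  also have "\<dots> = dim A"
    using subset_le_dim[OF s1] subset_le_dim[OF s2] by simp
  also have "\<dots> = card A" by (rule dim_eq_card_independent[OF indA])
  also have "\<dots> = card {j. \<mu> j \<noteq> 0}" unfolding A_def
    by (rule card_image) (auto simp: inj_on_def axis_eq_axis)
  finally show ?thesis .
qed

lemma rank_centered: "rank (centered (X::real^'n^'p)) < CARD('n)"
proof -
  define one :: "real^'n" where "one = (\<chi> j. 1)"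
  have "centered X *v one = 0"
  proof -
    have "(\<Sum>j\<in>UNIV. X$i$j - (\<Sum>k\<in>UNIV. X$i$k) / real CARD('n)) = 0" for i
      by (simp add: sum_subtractf)
    then show ?thesis by (simp add: centered_def one_def matrix_vector_mult_def vec_eq_iff)
  qed
  moreover have "one \<noteq> 0" by (simp add: one_def vec_eq_iff)
  ultimately have "\<not> inj ((*v) (centered X))"
    by (metis matrix_vector_mult_0_right inj_eq)
  then show ?thesis by (simp add: less_rank_noninjective)
qed

lemma aS_closed:
  fixes Q Qi :: "real^'p^'p" and \<mu> :: "'p \<Rightarrow> real"
  assumes QiQ: "Qi ** Q = mat 1" and QQi: "Q ** Qi = mat 1" and Wd: "W = Q ** dg \<mu> ** Qi"
    and nn: "\<And>j. \<mu> j \<ge> 0" and ap: "\<alpha> > 0"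
  shows "a_S W n \<alpha> c0 = ((real n - real CARD('p) - 1) * (\<Sum>j\<in>UNIV. 1/(\<mu> j + \<alpha>))
            + \<alpha> * (\<Sum>j\<in>UNIV. 1/(\<mu> j + \<alpha>))^2) / (\<Sum>j\<in>UNIV. \<mu> j / (\<mu> j + \<alpha>)^2) - (2 * c0 + 1)"
proof -
  have nz: "\<mu> j + \<alpha> \<noteq> 0" for j using nn[of j] ap by linarith
  have V: "matrix_inv (W + \<alpha> *\<^sub>R mat 1) = Q ** dg (\<lambda>i. 1 / (\<mu> i + \<alpha>)) ** Qi"
    unfolding Wd by (rule inv_shift[OF QiQ QQi nz])
  have trV: "trace (Q ** dg (\<lambda>i. 1 / (\<mu> i + \<alpha>)) ** Qi) = (\<Sum>j\<in>UNIV. 1/(\<mu> j + \<alpha>))"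
    by (rule trace_conj[OF QiQ])
  have VVW: "Q ** dg (\<lambda>i. 1 / (\<mu> i + \<alpha>)) ** Qi ** (Q ** dg (\<lambda>i. 1 / (\<mu> i + \<alpha>)) ** Qi) ** W
     = Q ** dg (\<lambda>i. 1 / (\<mu> i + \<alpha>) * (1 / (\<mu> i + \<alpha>)) * \<mu> i) ** Qi"
    unfolding Wd conj_mult[OF QiQ] ..
  have trVVW: "trace (Q ** dg (\<lambda>i. 1 / (\<mu> i + \<alpha>) * (1 / (\<mu> i + \<alpha>)) * \<mu> i) ** Qi)
      = (\<Sum>j\<in>UNIV. \<mu> j / (\<mu> j + \<alpha>)^2)"
    unfolding trace_conj[OF QiQ] by (rule sum.cong) (auto simp: power2_eq_square)
  show ?thesis unfolding a_S_def Let_def V trV VVW trVVW ..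
qed

lemma filterlim_scale_right0: "(T::real) > 0 \<Longrightarrow> filterlim (\<lambda>c. c * T) (at_right 0) (at_right 0)"
proof (rule tendsto_imp_filterlim_at_right)
  assume "T > 0"
  show "((\<lambda>c. c * T) \<longlongrightarrow> 0) (at_right 0)"
    using tendsto_mult[OF tendsto_ident_at[of 0 "{0<..}"] tendsto_const[of T]] by simp
  show "\<forall>\<^sub>F x in at_right 0. 0 < x * T" using \<open>T > 0\<close>
    by (auto simp: eventually_at_right_less intro: eventually_mono[OF eventually_at_right_less])
qed

lemma filterlim_scale_top: "(T::real) > 0 \<Longrightarrow> filterlim (\<lambda>c. c * T) at_top at_top"
proof -
  assume "T > 0"
  have "filterlim (\<lambda>c. T * c) at_top at_top"
    by (rule filterlim_tendsto_pos_mult_at_top[OF tendsto_const \<open>T > 0\<close> filterlim_ident])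
  then show ?thesis by (simp add: mult.commute)
qed

theorem proposition3:
  fixes X :: "real^'n^'p" and Sig :: "real^'p^'p"
  assumes n2: "CARD('n) \<ge> 2"
    and Sig_pd: "pos_def_mat Sig"
    and np: "\<bar>int CARD('n) - int CARD('p) - 1\<bar> > 1"
    and full_rank: "rank (inv_sqrt_mat Sig ** centered X) = min CARD('p) (CARD('n) - 1)"
  shows
    "((\<lambda>c. a_S (Wmat X Sig) CARD('n) c 0) \<longlongrightarrow>
        \<bar>real CARD('n) - real CARD('p) - 1\<bar> - 1) (at_right 0)
   \<and> ((\<lambda>c. a_S (Wmat X Sig) CARD('n) (c * trace (Wmat X Sig)) c) \<longlongrightarrow>
        \<bar>real CARD('n) - real CARD('p) - 1\<bar> - 1) (at_right 0)
   \<and> (\<forall>s. singular_value (inv_sqrt_mat Sig ** centered X) s \<and> s > 0 \<longrightarrow>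
       ((\<lambda>c. a_S (Wmat X Sig) CARD('n) c 0 / (s^2 + c)) \<longlongrightarrow>
          (real (CARD('n) - 1) * real CARD('p)) / trace (Wmat X Sig)) at_top
     \<and> ((\<lambda>c. a_S (Wmat X Sig) CARD('n) (c * trace (Wmat X Sig)) c
               / (s^2 + c * trace (Wmat X Sig))) \<longlongrightarrow>
          (real (CARD('n) - 1) * real CARD('p) - 2) / trace (Wmat X Sig)) at_top)"

proof -
  define C where "C = centered X"
  define S where "S = matrix_inv Sig"
  define W where "W = Wmat X Sig"
  define n where "n = CARD('n)"
  define p where "p = CARD('p)"
  define m where "m = min p (n - 1)"
  have W_eq: "W = C ** transpose C ** S" by (simp add: W_def Wmat_def C_def S_def)
  note SF = Sig_facts[OF Sig_pd, folded S_def]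
  have WF: "transpose (S ** W) = S ** W" "\<And>x. x \<bullet> (S *v (W *v x)) \<ge> 0"
    using W_facts[OF SF(3), of W X] W_eq by (auto simp: C_def)
  have ex: "\<exists>(Q::real^'p^'p) Qi \<mu>. Qi ** Q = mat 1 \<and> Q ** Qi = mat 1 \<and> W = Q ** dg \<mu> ** Qi \<and> (\<forall>j. \<mu> j \<ge> 0)"
    by (rule diag_exists[of S W]) (use SF WF in auto)
  then obtain Q Qi :: "real^'p^'p" and \<mu> :: "'p \<Rightarrow> real" where QiQ: "Qi ** Q = mat 1" and QQi: "Q ** Qi = mat 1"
    and Wd: "W = Q ** dg \<mu> ** Qi" and nn': "\<forall>j. \<mu> j \<ge> 0"
    by blast
  have nn: "\<And>j. \<mu> j \<ge> 0" using nn' by blast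
  have rC: "rank C = m"
  proof (rule antisym)
    have "rank C < n" unfolding C_def n_def by (rule rank_centered)
    moreover have "rank C \<le> p" using rank_bound[of C] by (simp add: p_def)
    ultimately show "rank C \<le> m" by (simp add: m_def)
    have "m = rank (inv_sqrt_mat Sig ** C)" using full_rank by (simp add: m_def n_def p_def C_def)
    also have "\<dots> \<le> rank C" by (rule rank_mul_le_right)
    finally show "m \<le> rank C" .
  qed
  have "rank W = rank C"
    unfolding W_eq using rank_mul_inv_right[OF SF(2)] rank_CCt by simp
  moreover have "rank W = card {j. \<mu> j \<noteq> 0}" unfolding Wd rank_conj[OF QiQ QQi] by (rule rank_dg)
  ultimately have cnz: "card {j. \<mu> j \<noteq> 0} = m" using rC by simp
  define k where "k = card {j. \<mu> j = 0}"
  have "{j. \<mu> j = 0} = UNIV - {j. \<mu> j \<noteq> 0}" by auto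
  then have kdef: "k = p - m" unfolding k_def p_def using cnz
    by (simp add: card_Diff_subset)
  have p1: "p \<ge> 1" unfolding p_def by (simp add: Suc_leI)
  have n2': "n \<ge> 2" using n2 by (simp add: n_def)
  have m1: "m \<ge> 1" using p1 n2' by (simp add: m_def)
  then obtain j0 where "\<mu> j0 \<noteq> 0" using cnz by (metis (mono_tags) Collect_empty_eq card.empty not_one_le_zero)
  then have pos: "\<exists>j. \<mu> j > 0" using nn[of j0] by (auto intro: exI[of _ j0])
  define T where "T = trace W"
  have Tsum: "T = (\<Sum>j\<in>UNIV. \<mu> j)" unfolding T_def Wd by (rule trace_conj[OF QiQ])
  have Tpos: "T > 0" unfolding Tsum using pos nn
    by (metis UNIV_I finite_class.finite_UNIV sum_pos2)
  define N where "N = real n - real p - 1"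
  have kc: "k = 0 \<or> N + real k = 0"
  proof (cases "p \<le> n - 1")
    case True then show ?thesis by (simp add: kdef m_def)
  next
    case False
    then have "m = n - 1" "k = p - (n - 1)" by (auto simp: m_def kdef)
    then show ?thesis using False n2' by (simp add: N_def of_nat_diff)
  qed
  have target: "N + 2 * real k - 1 = \<bar>real n - real p - 1\<bar> - 1"
  proof (cases "p \<le> n - 1")
    case True then show ?thesis using n2' by (simp add: kdef m_def N_def)
  next
    case False
    then have "k = p - (n - 1)" by (auto simp: m_def kdef)
    then show ?thesis using False n2' by (simp add: N_def of_nat_diff)
  qed
  define F where "F = (\<lambda>\<alpha>. (N * (\<Sum>j\<in>UNIV. 1/(\<mu> j + \<alpha>)) + \<alpha> * (\<Sum>j\<in>UNIV. 1/(\<mu> j + \<alpha>))^2)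
             / (\<Sum>j\<in>UNIV. \<mu> j / (\<mu> j + \<alpha>)^2))"
  have aS: "a_S W n \<alpha> c0 = F \<alpha> - (2 * c0 + 1)" if "\<alpha> > 0" for \<alpha> c0
    unfolding F_def N_def p_def by (rule aS_closed[OF QiQ QQi Wd nn that])
  have F0: "(F \<longlongrightarrow> N + 2 * real k) (at_right 0)"
    unfolding F_def k_def by (rule lim_zero[OF nn pos kc[unfolded k_def]])
  have part1: "((\<lambda>c. a_S W n c 0) \<longlongrightarrow> \<bar>real n - real p - 1\<bar> - 1) (at_right 0)"
  proof -
    have "((\<lambda>c. F c - (2 * 0 + 1)) \<longlongrightarrow> N + 2 * real k - (2 * 0 + 1)) (at_right 0)"
      by (intro tendsto_intros F0)
    then have "((\<lambda>c. F c - (2 * 0 + 1)) \<longlongrightarrow> \<bar>real n - real p - 1\<bar> - 1) (at_right 0)"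
      using target by simp
    then show ?thesis
      apply (rule Lim_transform_eventually)
      using eventually_at_right_less[of 0] by (auto elim!: eventually_mono simp: aS)
  qed
  have part2: "((\<lambda>c. a_S W n (c * T) c) \<longlongrightarrow> \<bar>real n - real p - 1\<bar> - 1) (at_right 0)"
  proof -
    have "((\<lambda>c. F (c * T)) \<longlongrightarrow> N + 2 * real k) (at_right 0)"
      by (rule filterlim_compose[OF F0 filterlim_scale_right0[OF Tpos]])
    moreover have "((\<lambda>c::real. c) \<longlongrightarrow> 0) (at_right 0)" by (rule tendsto_ident_at)
    ultimately have "((\<lambda>c. F (c * T) - (2 * c + 1)) \<longlongrightarrow> N + 2 * real k - (2 * 0 + 1)) (at_right 0)"
      by (intro tendsto_intros)
    then have "((\<lambda>c. F (c * T) - (2 * c + 1)) \<longlongrightarrow> \<bar>real n - real p - 1\<bar> - 1) (at_right 0)"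
      using target by simp
    then show ?thesis
      apply (rule Lim_transform_eventually)
      using eventually_at_right_less[of 0] Tpos by (auto elim!: eventually_mono simp: aS)
  qed
  have lim: "real (n - 1) * real p / T = (N * real p + (real p)^2) / T"
    using n2' by (simp add: N_def of_nat_diff power2_eq_square algebra_simps)
  have part3: "((\<lambda>c. a_S W n c 0 / (s^2 + c)) \<longlongrightarrow> real (n - 1) * real p / T) at_top
     \<and> ((\<lambda>c. a_S W n (c * T) c / (s^2 + c * T)) \<longlongrightarrow> (real (n - 1) * real p - 2) / T) at_top" for s
  proof
    have LI1: "((\<lambda>\<alpha>. (F \<alpha> - 1) / (s^2 + \<alpha>)) \<longlongrightarrow> (N * real p + (real p)^2) / T) at_top"
      unfolding F_def p_def by (rule lim_inf(1)[OF nn Tsum Tpos])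
    have LI2: "((\<lambda>\<alpha>. (F \<alpha> - (2 * (\<alpha> / T) + 1)) / (s^2 + \<alpha>)) \<longlongrightarrow> (N * real p + (real p)^2 - 2) / T) at_top"
      unfolding F_def p_def by (rule lim_inf(2)[OF nn Tsum Tpos])
    show "((\<lambda>c. a_S W n c 0 / (s^2 + c)) \<longlongrightarrow> real (n - 1) * real p / T) at_top"
      unfolding lim using LI1
      apply (rule Lim_transform_eventually)
      using eventually_gt_at_top[of 0] apply (rule eventually_mono)
      subgoal for x using aS[of x 0] by simp
      done
    have L0: "((\<lambda>c. (F (c * T) - (2 * (c * T / T) + 1)) / (s^2 + c * T)) \<longlongrightarrow> (N * real p + (real p)^2 - 2) / T) at_top"
      by (rule filterlim_compose[OF LI2 filterlim_scale_top[OF Tpos]])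
    have eq: "(N * real p + (real p)^2 - 2) / T = (real (n - 1) * real p - 2) / T"
      using n2' by (simp add: N_def of_nat_diff power2_eq_square algebra_simps)
    from tendsto_eq_rhs[OF L0 eq]
    show "((\<lambda>c. a_S W n (c * T) c / (s^2 + c * T)) \<longlongrightarrow> (real (n - 1) * real p - 2) / T) at_top"
      apply (rule Lim_transform_eventually)
      using eventually_gt_at_top[of 0] apply (rule eventually_mono)
      subgoal for x using aS[of "x * T" x] Tpos by simp
      done
  qed
  show ?thesis
    using part1 part2 part3 unfolding W_def T_def n_def p_def by blast
qed

end
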